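(* Let $\Lambda$ be a finite-dimensional algebra over a field of characteristic $p>0$, and let ${\bf T}(\Lambda)=\Lambda\ltimes\Lambda^*$ be its trivial extension. (1) $T_0({\bf T}(\Lambda))^\perp=Z({\bf T}(\Lambda))=Z(\Lambda)\ltimes \operatorname{Ann}_{\Lambda^*}(K(\Lambda))$. (2) For all $n\ge 1$, $T_n({\bf T}(\Lambda))^{\perp} = 0 \ltimes \operatorname{Ann}_{\Lambda^*}(T_n(\Lambda))$. (3) For all $n\ge 1$, $T_n(Z({\bf T}(\Lambda)))^\perp/K({\bf T}(\Lambda))= 0\ltimes \left(\operatorname{Ann}_{\Lambda^*}(T_n(Z(\Lambda)))/[\Lambda,\Lambda^*]\right)$. (4) For all $n\ge 1$, $P_n(Z({\bf T}(\Lambda)))^\perp/K({\bf T}(\Lambda))= \Lambda/K(\Lambda)\ltimes \left(\operatorname{Ann}_{\Lambda^*}(P_n(Z(\Lambda)))/[\Lambda,\Lambda^*]\right)$.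
   Context: For a finite-dimensional algebra $A$ over a field $k$ of characteristic $p>0$: $K(A)$ is the $k$-subspace spanned by all commutators $ab-ba$, $Z(A)$ is the center, and $T_n(A)=\{x\in A\mid x^{p^n}\in K(A)\}$ for $n\ge 0$ (so $T_0(A)=K(A)$). For $\Lambda$ finite-dimensional, $\Lambda^*=\operatorname{Hom}_k(\Lambda,k)$ is a $\Lambda$-$\Lambda$-bimodule via $(a\varphi)(b)=\varphi(ba)$, $(\varphi a)(b)=\varphi(ab)$; the trivial extension ${\bf T}(\Lambda)=\Lambda\ltimes\Lambda^*$ has multiplication $(a,\varphi)(b,\psi)=(ab,a\psi+\varphi b)$ and is a symmetric algebra with symmetrizing form $\langle (a,\varphi),(b,\psi)\rangle=\psi(a)+\varphi(b)$ (coming from $\pi(a,\varphi)=\varphi(1)$). For a subspace $M$ of ${\bf T}(\Lambda)$, $M^\perp$ denotes its orthogonal space with respect to this form. For a subspace $V\le\Lambda$, $\operatorname{Ann}_{\Lambda^*}(V)=\{\varphi\in\Lambda^*\mid \varphi(V)=0\}$. $[\Lambda,\Lambda^*]$ is the subspace of $\Lambda^*$ spanned by all $a\varphi-\varphi a$ with $a\in\Lambda$, $\varphi\in\Lambda^*$. For a commutative algebra $Z$, $P_n(Z)$ is the subspace spanned by all $z^{p^n}$, $z\in Z$, and $T_n(Z)=\{z\in Z\mid z^{p^n}=0\}$. In (3) and (4), $T_n(Z({\bf T}(\Lambda)))^\perp$ and $P_n(Z({\bf T}(\Lambda)))^\perp$ are orthogonal spaces in ${\bf T}(\Lambda)$ (they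 contain $K({\bf T}(\Lambda))$), and $K({\bf T}(\Lambda))=K(\Lambda)\ltimes[\Lambda,\Lambda^*]$. *)

theory Defs
  imports Complex_Main "HOL-Library.Function_Algebras" "HOL-Library.Product_Plus"
begin

definition Kc :: "('k::field \<Rightarrow> 'b::ab_group_add \<Rightarrow> 'b) \<Rightarrow> ('b \<Rightarrow> 'b \<Rightarrow> 'b) \<Rightarrow> 'b set \<Rightarrow> 'b set" where
  "Kc sc m A = module.span sc {m a b - m b a | a b. a \<in> A \<and> b \<in> A}"

definition Zc :: "('b \<Rightarrow> 'b \<Rightarrow> 'b) \<Rightarrow> 'b set \<Rightarrow> 'b set" where
  "Zc m A = {z \<in> A. \<forall>a \<in> A. m z a = m a z}"

definition apow :: "('b \<Rightarrow> 'b \<Rightarrow> 'b) \<Rightarrow> 'b \<Rightarrow> 'b \<Rightarrow> nat \<Rightarrow> 'b" where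
  "apow m one x k = (m x ^^ k) one"

definition Tc :: "('k::field \<Rightarrow> 'b::ab_group_add \<Rightarrow> 'b) \<Rightarrow> ('b \<Rightarrow> 'b \<Rightarrow> 'b) \<Rightarrow> 'b \<Rightarrow> nat \<Rightarrow> nat \<Rightarrow> 'b set \<Rightarrow> 'b set" where
  "Tc sc m one p n A = {x \<in> A. apow m one x (p ^ n) \<in> Kc sc m A}"

definition TZc :: "('b \<Rightarrow> 'b \<Rightarrow> 'b) \<Rightarrow> 'b::zero \<Rightarrow> nat \<Rightarrow> nat \<Rightarrow> 'b set \<Rightarrow> 'b set" where
  "TZc m one p n Z = {z \<in> Z. apow m one z (p ^ n) = 0}"

definition PZc :: "('k::field \<Rightarrow> 'b::ab_group_add \<Rightarrow> 'b) \<Rightarrow> ('b \<Rightarrow> 'b \<Rightarrow> 'b) \<Rightarrow> 'b \<Rightarrow> nat \<Rightarrow> nat \<Rightarrow> 'b set \<Rightarrow> 'b set" where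
  "PZc sc m one p n Z = module.span sc {apow m one z (p ^ n) | z. z \<in> Z}"

definition dual :: "('k::field \<Rightarrow> 'a::ab_group_add \<Rightarrow> 'a) \<Rightarrow> ('a \<Rightarrow> 'k) set" where
  "dual sc = {\<phi>. Vector_Spaces.linear sc ((*) :: 'k \<Rightarrow> 'k \<Rightarrow> 'k) \<phi>}"

definition TE :: "('k::field \<Rightarrow> 'a::ab_group_add \<Rightarrow> 'a) \<Rightarrow> ('a \<times> ('a \<Rightarrow> 'k)) set" where
  "TE sc = UNIV \<times> dual sc"

text \<open>(a,phi)(b,psi) = (ab, a psi + phi b), where (a psi)(x) = psi(x a), (phi b)(x) = phi(b x).\<close>
definition tmult :: "('a::ring_1 \<times> ('a \<Rightarrow> 'k::field)) \<Rightarrow> ('a \<times> ('a \<Rightarrow> 'k)) \<Rightarrow> ('a \<times> ('a \<Rightarrow> 'k))" where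
  "tmult x y = (fst x * fst y, \<lambda>t. snd y (t * fst x) + snd x (fst y * t))"

definition tone :: "('a::ring_1 \<times> ('a \<Rightarrow> 'k::field))" where
  "tone = (1, \<lambda>t. 0)"

definition tscale :: "('k::field \<Rightarrow> 'a::ab_group_add \<Rightarrow> 'a) \<Rightarrow> 'k \<Rightarrow> ('a \<times> ('a \<Rightarrow> 'k)) \<Rightarrow> ('a \<times> ('a \<Rightarrow> 'k))" where
  "tscale sc c x = (sc c (fst x), \<lambda>t. c * snd x t)"

definition tform :: "('a \<times> ('a \<Rightarrow> 'k::field)) \<Rightarrow> ('a \<times> ('a \<Rightarrow> 'k)) \<Rightarrow> 'k" where
  "tform x y = snd y (fst x) + snd x (fst y)"

definition perp :: "('k::field \<Rightarrow> 'a::ab_group_add \<Rightarrow> 'a) \<Rightarrow> ('a \<times> ('a \<Rightarrow> 'k)) set \<Rightarrow> ('a \<times> ('a \<Rightarrow> 'k)) set" where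
  "perp sc M = {x \<in> TE sc. \<forall>y \<in> M. tform x y = 0}"

definition Ann :: "('k::field \<Rightarrow> 'a::ab_group_add \<Rightarrow> 'a) \<Rightarrow> 'a set \<Rightarrow> ('a \<Rightarrow> 'k) set" where
  "Ann sc V = {\<phi> \<in> dual sc. \<forall>v \<in> V. \<phi> v = 0}"

end

theory Submission
  imports Defs
begin

lemma vs_field: "vector_space ((*) :: 'k::field \<Rightarrow> 'k \<Rightarrow> 'k)"
  by unfold_locales (auto simp: algebra_simps)

context
  fixes sc :: "'k::field \<Rightarrow> 'a::ring_1 \<Rightarrow> 'a"
  assumes vs: "vector_space sc"
    and al: "\<And>c a b. sc c (a * b) = sc c a * b"
    and ar: "\<And>c a b. sc c (a * b) = a * sc c b"
begin

interpretation V: vector_space sc by (rule vs)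

lemma dual_hom: "\<phi> \<in> dual sc \<Longrightarrow> module_hom sc (*) \<phi>"
  unfolding dual_def by (simp add: module_hom_iff_linear)

lemma dual_add: "\<phi> \<in> dual sc \<Longrightarrow> \<phi> (x + y) = \<phi> x + \<phi> y"
  using module_hom.add[OF dual_hom] by blast
lemma dual_scale: "\<phi> \<in> dual sc \<Longrightarrow> \<phi> (sc c x) = c * \<phi> x"
  using module_hom.scale[OF dual_hom] by blast
lemma dual_zero: "\<phi> \<in> dual sc \<Longrightarrow> \<phi> 0 = 0"
  using module_hom.zero[OF dual_hom] by blast
lemma dual_diff: "\<phi> \<in> dual sc \<Longrightarrow> \<phi> (x - y) = \<phi> x - \<phi> y"
  using module_hom.diff[OF dual_hom] by blast

lemma dualI:
  assumes "\<And>x y. \<phi> (x + y) = \<phi> x + \<phi> y" "\<And>c x. \<phi> (sc c x) = c * \<phi> x"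
  shows "\<phi> \<in> dual sc"
  unfolding dual_def using assms vs vs_field
  by (simp add: module_hom_iff_linear[symmetric] module_hom_iff module_iff_vector_space)

lemma zero_dual: "(0 :: 'a \<Rightarrow> 'k) \<in> dual sc"
  by (rule dualI) auto

lemma tmod: "module (tscale sc)"
  by unfold_locales
    (auto simp: tscale_def fun_eq_iff algebra_simps V.scale_right_distrib V.scale_left_distrib)

lemma span_dual_zero:
  assumes "\<phi> \<in> dual sc" "\<And>s. s \<in> S \<Longrightarrow> \<phi> s = 0" "x \<in> V.span S"
  shows "\<phi> x = 0"
  using assms(3)
proof (induction rule: V.span_induct_alt)
  case base then show ?case using dual_zero[OF assms(1)] .
next
  case (step c x y) then show ?case using assms(1,2) by (simp add: dual_add dual_scale)
qed

lemma sep: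
  assumes "x \<notin> V.span S"
  shows "\<exists>\<phi>\<in>dual sc. (\<forall>s\<in>S. \<phi> s = 0) \<and> \<phi> x \<noteq> 0"
proof -
  interpret P: vector_space_pair sc "(*) :: 'k \<Rightarrow> 'k \<Rightarrow> 'k"
    unfolding vector_space_pair_def using vs vs_field by blast
  obtain BW where BW: "BW \<subseteq> V.span S" "V.independent BW" "V.span S \<subseteq> V.span BW" "card BW = V.dim (V.span S)"
    by (rule V.basis_exists)
  have "V.span BW \<subseteq> V.span S" using V.span_mono[OF BW(1)] V.span_span by simp
  then have xn: "x \<notin> V.span BW" using assms by blast
  have ind: "V.independent (insert x BW)"
    using V.independent_insertI[OF xn BW(2)] .
  define \<phi> where "\<phi> = P.construct (insert x BW) (\<lambda>y. if y = x then 1 else 0)"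
  have lin: "Vector_Spaces.linear sc (*) \<phi>"
    unfolding \<phi>_def by (rule P.linear_construct[OF ind])
  have px: "\<phi> x = 1" unfolding \<phi>_def using P.construct_basis[OF ind] by simp
  have pb: "\<phi> b = 0" if "b \<in> BW" for b
  proof -
    have "b \<noteq> x" using xn V.span_base[OF that] by blast
    then show ?thesis unfolding \<phi>_def using P.construct_basis[OF ind] that by simp
  qed
  have \<phi>d: "\<phi> \<in> dual sc" using lin unfolding dual_def by simp
  have s0: "\<phi> s = 0" if "s \<in> S" for s
  proof -
    have "s \<in> V.span BW" using BW(3) V.span_base[OF that] by blast
    then show ?thesis using span_dual_zero[of \<phi> BW s] \<phi>d pb by blast
  qed
  from \<phi>d show ?thesis using px s0 by (intro bexI[of _ \<phi>]) auto
qed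

lemma sep0: assumes "\<And>\<phi>. \<phi> \<in> dual sc \<Longrightarrow> \<phi> x = 0" shows "x = 0"
proof (rule ccontr)
  assume "x \<noteq> 0"
  then have "x \<notin> V.span {}" by simp
  then obtain \<phi> where "\<phi> \<in> dual sc" "\<phi> x \<noteq> 0" using sep by blast
  then show False using assms by blast
qed

lemma TE_iff: "x \<in> TE sc \<longleftrightarrow> snd x \<in> dual sc"
  by (cases x) (auto simp: TE_def)

lemma tmult_TE: assumes "x \<in> TE sc" "y \<in> TE sc" shows "tmult x y \<in> TE sc"
proof -
  have d: "snd x \<in> dual sc" "snd y \<in> dual sc" using assms by (auto simp: TE_iff)
  show ?thesis unfolding TE_iff tmult_def snd_conv
    apply (rule dualI)
    using d by (auto simp: dual_add dual_scale algebra_simps al[symmetric] ar[symmetric])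
qed

lemma diff_TE: assumes "x \<in> TE sc" "y \<in> TE sc" shows "x - y \<in> TE sc"
proof -
  have d: "snd x \<in> dual sc" "snd y \<in> dual sc" using assms by (auto simp: TE_iff)
  show ?thesis unfolding TE_iff
    apply (rule dualI)
    using d by (auto simp: dual_add dual_scale algebra_simps)
qed

interpretation T: module "tscale sc" by (rule tmod)

lemma fst_K: "y \<in> Kc (tscale sc) tmult (TE sc) \<Longrightarrow> fst y \<in> Kc sc (*) UNIV"
  unfolding Kc_def
proof (induction rule: T.span_induct_alt)
  case base then show ?case by (simp add: V.span_zero)
next
  case (step c x y)
  then obtain u v where "x = tmult u v - tmult v u" by blast
  then have "fst x \<in> {a * b - b * a |a b. a \<in> UNIV \<and> b \<in> UNIV}" by (auto simp: tmult_def)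
  then have "fst x \<in> V.span {a * b - b * a |a b. a \<in> UNIV \<and> b \<in> UNIV}" by (rule V.span_base)
  then show ?case using step(2) by (simp add: tscale_def V.span_add V.span_scale)
qed

lemma K_emb: "a \<in> Kc sc (*) UNIV \<Longrightarrow> (a, 0) \<in> Kc (tscale sc) tmult (TE sc)"
  unfolding Kc_def
proof (induction rule: V.span_induct_alt)
  case base
  have e: "(0 :: 'a, 0 :: 'a \<Rightarrow> 'k) = 0" by (simp add: zero_prod_def)
  show ?case by (subst e) (rule T.span_zero)
next
  case (step c x y)
  then obtain a b where x: "x = a * b - b * a" by blast
  have tm: "tmult (u, 0 :: 'a \<Rightarrow> 'k) (v, 0) = (u * v, 0)" for u v
    by (simp add: tmult_def zero_fun_def)
  have "(x, 0 :: 'a \<Rightarrow> 'k) = tmult (a, 0) (b, 0) - tmult (b, 0) (a, 0)"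
    by (simp add: x tm)
  moreover have "(a, 0 :: 'a \<Rightarrow> 'k) \<in> TE sc" "(b, 0 :: 'a \<Rightarrow> 'k) \<in> TE sc" by (auto simp: TE_iff zero_dual)
  ultimately have "(x, 0 :: 'a \<Rightarrow> 'k) \<in> T.span {tmult u v - tmult v u |u v. u \<in> TE sc \<and> v \<in> TE sc}"
    by (intro T.span_base) blast
  then have "tscale sc c (x, 0) + (y, 0 :: 'a \<Rightarrow> 'k) \<in> T.span {tmult u v - tmult v u |u v. u \<in> TE sc \<and> v \<in> TE sc}"
    using step(2) by (intro T.span_add T.span_scale)
  moreover have "tscale sc c (x, 0) + (y, 0 :: 'a \<Rightarrow> 'k) = (sc c x + y, 0)" by (simp add: tscale_def fun_eq_iff)
  ultimately show ?case by (simp add: zero_fun_def)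
qed

lemma tform_span:
  assumes x: "x \<in> TE sc" and g: "\<And>g. g \<in> G \<Longrightarrow> tform x g = 0" and y: "y \<in> T.span G"
  shows "tform x y = 0"
  using y
proof (induction rule: T.span_induct_alt)
  case base then show ?case using x by (simp add: tform_def TE_iff dual_zero)
next
  case (step c g y)
  have d: "snd x \<in> dual sc" using x by (simp add: TE_iff)
  have "tform x (tscale sc c g + y) = c * tform x g + tform x y"
    by (simp add: tform_def tscale_def dual_add[OF d] dual_scale[OF d] algebra_simps)
  then show ?case using g step by simp
qed

lemma apow_fst: "fst (apow tmult tone x k) = fst x ^ k"
  by (induction k) (auto simp: apow_def tmult_def tone_def)

lemma apow_ring: "apow (*) 1 a k = (a :: 'a) ^ k"
  by (induction k) (auto simp: apow_def)

lemma apow_one: "apow tmult tone x 1 = (x :: 'a \<times> ('a \<Rightarrow> 'k))"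
  by (cases x) (simp add: apow_def tmult_def tone_def)

lemma apow_a0: "apow tmult tone (a, 0) k = (a ^ k, 0 :: 'a \<Rightarrow> 'k)"
  by (induction k) (auto simp: apow_def tmult_def tone_def fun_eq_iff)

lemma apow_nil: assumes "\<psi> \<in> dual sc"
  shows "apow tmult tone (0 :: 'a, \<psi>) (Suc (Suc k)) = 0"
proof (induction k)
  case 0 then show ?case using dual_zero[OF assms]
    by (simp add: apow_def tmult_def tone_def fun_eq_iff zero_prod_def)
next
  case (Suc k)
  have "apow tmult tone (0 :: 'a, \<psi>) (Suc (Suc (Suc k))) = tmult (0, \<psi>) 0"
    using Suc.IH unfolding apow_def by simp
  moreover have "tmult (0 :: 'a, \<psi>) 0 = 0" using dual_zero[OF assms]
    by (simp add: tmult_def fun_eq_iff zero_prod_def)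
  ultimately show ?case by simp
qed

lemma apow_central: assumes "a \<in> Zc (*) UNIV"
  shows "apow tmult tone (a, \<phi>) (Suc k) = (a ^ Suc k, \<lambda>t. of_nat (Suc k) * \<phi> (a ^ k * t))"
proof (induction k)
  case 0 then show ?case by (simp add: apow_def tmult_def tone_def fun_eq_iff)
next
  case (Suc k)
  have c: "t * a = a * t" for t using assms by (simp add: Zc_def)
  have p: "a * a ^ Suc k = a ^ Suc (Suc k)" by simp
  have e: "a ^ k * (a * t) = a ^ Suc k * t" for t by (metis mult.assoc power_Suc power_Suc2)
  have "apow tmult tone (a, \<phi>) (Suc (Suc k)) = tmult (a, \<phi>) (apow tmult tone (a, \<phi>) (Suc k))"
    by (simp add: apow_def)
  also have "\<dots> = (a ^ Suc (Suc k), \<lambda>t. of_nat (Suc (Suc k)) * \<phi> (a ^ Suc k * t))"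
    unfolding Suc by (simp add: tmult_def fun_eq_iff c e p algebra_simps del: power_Suc)
  finally show ?case .
qed

lemma Z_TE: "Zc tmult (TE sc) = Zc (*) UNIV \<times> Ann sc (Kc sc (*) UNIV)"
proof (intro set_eqI iffI)
  fix z assume z: "z \<in> Zc tmult (TE sc)"
  obtain a \<phi> where zz: "z = (a, \<phi>)" by (cases z)
  have \<phi>d: "\<phi> \<in> dual sc" using z zz by (simp add: Zc_def TE_iff)
  have comm: "tmult (a, \<phi>) (b, 0) = tmult (b, 0) (a, \<phi>)" for b
    using z zz by (auto simp: Zc_def TE_iff zero_dual)
  have ab: "a * b = b * a" for b using comm[of b] by (simp add: tmult_def)
  have pb: "\<phi> (b * t) = \<phi> (t * b)" for b t
  proof -
    have "(\<lambda>t. \<phi> (b * t)) = (\<lambda>t. \<phi> (t * b))" using comm[of b] by (simp add: tmult_def)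
    then show ?thesis by (rule fun_cong)
  qed
  have gz: "\<phi> s = 0" if "s \<in> {(a::'a) * b - b * a |a b. a \<in> UNIV \<and> b \<in> UNIV}" for s
    using that pb dual_diff[OF \<phi>d] by auto
  have "\<phi> x = 0" if "x \<in> Kc sc (*) UNIV" for x
    by (rule span_dual_zero[OF \<phi>d gz that[unfolded Kc_def]])
  then show "z \<in> Zc (*) UNIV \<times> Ann sc (Kc sc (*) UNIV)" using ab zz \<phi>d by (auto simp: Zc_def Ann_def)
next
  fix z :: "'a \<times> ('a \<Rightarrow> 'k)" assume z: "z \<in> Zc (*) UNIV \<times> Ann sc (Kc sc (*) UNIV)"
  obtain a \<phi> where zz: "z = (a, \<phi>)" by (cases z)
  have a: "a * b = b * a" for b using z zz by (simp add: Zc_def)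
  have \<phi>d: "\<phi> \<in> dual sc" using z zz by (simp add: Ann_def)
  have pk: "\<phi> (b * t - t * b) = 0" for b t
  proof -
    have "b * t - t * b \<in> Kc sc (*) UNIV" unfolding Kc_def by (rule V.span_base) blast
    then show ?thesis using z zz by (simp add: Ann_def)
  qed
  have pb: "\<phi> (b * t) = \<phi> (t * b)" for b t using pk[of b t] dual_diff[OF \<phi>d] by simp
  have "tmult (a, \<phi>) y = tmult y (a, \<phi>)" for y
  proof (cases y)
    case (Pair b \<psi>)
    show ?thesis unfolding Pair tmult_def fst_conv snd_conv
      using a[of b] a pb[of b] by (auto simp: fun_eq_iff add.commute)
  qed
  then show "z \<in> Zc tmult (TE sc)" using zz \<phi>d by (simp add: Zc_def TE_iff)
qed

end

theorem theorem4p1: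
  fixes scale :: "'k::field \<Rightarrow> 'a::ring_1 \<Rightarrow> 'a" and B :: "'a set" and p :: nat
  assumes fd: "finite_dimensional_vector_space scale B"
    and alg_l: "\<And>c a b. scale c (a * b) = scale c a * b"
    and alg_r: "\<And>c a b. scale c (a * b) = a * scale c b"
    and charp: "p = CHAR('k)" and ppos: "p > 0"
  shows
    "(perp scale (Tc (tscale scale) tmult tone p 0 (TE scale)) = Zc tmult (TE scale)
     \<and> Zc tmult (TE scale) = Zc (*) UNIV \<times> Ann scale (Kc scale (*) UNIV))
   \<and> (\<forall>n\<ge>1. perp scale (Tc (tscale scale) tmult tone p n (TE scale))
            = {0} \<times> Ann scale (Tc scale (*) 1 p n UNIV))
   \<and> (\<forall>n\<ge>1. perp scale (TZc tmult tone p n (Zc tmult (TE scale)))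
            = Kc scale (*) UNIV \<times> Ann scale (TZc (*) 1 p n (Zc (*) UNIV)))
   \<and> (\<forall>n\<ge>1. perp scale (PZc (tscale scale) tmult tone p n (Zc tmult (TE scale)))
            = UNIV \<times> Ann scale (PZc scale (*) 1 p n (Zc (*) UNIV)))"
proof -
  have vs: "vector_space scale" using fd by (simp add: finite_dimensional_vector_space_def)
  interpret V: vector_space scale by (rule vs)
  interpret T: module "tscale scale" by (rule tmod[OF vs alg_l alg_r])
  note TE_iff' = TE_iff[OF vs alg_l alg_r]
  note zero_dual' = zero_dual[OF vs alg_l alg_r]
  note dual_zero' = dual_zero[OF vs alg_l alg_r]
  note dual_diff' = dual_diff[OF vs alg_l alg_r]
  note sep' = sep[OF vs alg_l alg_r]
  note sep0' = sep0[OF vs alg_l alg_r]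
  note span_dual_zero' = span_dual_zero[OF vs alg_l alg_r]
  note tform_span' = tform_span[OF vs alg_l alg_r]
  note tmult_TE' = tmult_TE[OF vs alg_l alg_r]
  note diff_TE' = diff_TE[OF vs alg_l alg_r]
  note fst_K' = fst_K[OF vs alg_l alg_r]
  note K_emb' = K_emb[OF vs alg_l alg_r]
  note apow_fst' = apow_fst[OF vs alg_l alg_r]
  note apow_ring' = apow_ring[OF vs alg_l alg_r]
  note apow_one' = apow_one[OF vs alg_l alg_r]
  note apow_a0' = apow_a0[OF vs alg_l alg_r]
  note apow_nil' = apow_nil[OF vs alg_l alg_r]
  note apow_central' = apow_central[OF vs alg_l alg_r]
  define KT where "KT = Kc (tscale scale) tmult (TE scale)"
  define Z where "Z = Zc tmult (TE scale)"
  have Zeq: "Z = Zc (*) UNIV \<times> Ann scale (Kc scale (*) UNIV)"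
    unfolding Z_def by (rule Z_TE[OF vs alg_l alg_r])
  have p1: "p \<noteq> Suc 0" using charp CHAR_not_1[where 'a='k] by simp
  have mf: "of_nat (p ^ n) = (0::'k) \<and> (\<exists>k. p ^ n = Suc (Suc k))" if n: "n \<ge> 1" for n
  proof
    show "of_nat (p ^ n) = (0::'k)" using n by (simp add: charp)
    have "p \<le> p ^ n" using n ppos by (intro self_le_power) auto
    then show "\<exists>k. p ^ n = Suc (Suc k)" using p1 ppos by (intro exI[of _ "p ^ n - 2"]) simp
  qed
  have comT: "tmult u v - tmult v u \<in> TE scale \<inter> KT" if "u \<in> TE scale" "v \<in> TE scale" for u v
    using that tmult_TE' diff_TE' unfolding KT_def Kc_def by (blast intro: T.span_base)
  have T0: "Tc (tscale scale) tmult tone p 0 (TE scale) = TE scale \<inter> KT"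
    using apow_one' apow_one'[unfolded One_nat_def] by (auto simp: Tc_def KT_def)
  have P1: "perp scale (Tc (tscale scale) tmult tone p 0 (TE scale)) = Z"
  proof (intro set_eqI iffI)
    fix x assume x: "x \<in> perp scale (Tc (tscale scale) tmult tone p 0 (TE scale))"
    obtain c \<chi> where xx: "x = (c, \<chi>)" by (cases x)
    have xTE: "x \<in> TE scale" and orth: "\<And>y. y \<in> TE scale \<inter> KT \<Longrightarrow> tform x y = 0"
      using x T0 by (auto simp: perp_def)
    have \<chi>d: "\<chi> \<in> dual scale" using xTE xx TE_iff' by simp
    have cen: "d * c = c * d" for d
    proof -
      have "\<psi> (d * c - c * d) = 0" if \<psi>d: "\<psi> \<in> dual scale" for \<psi>
      proof -
        have "(0, \<psi>) \<in> TE scale" "(d, 0) \<in> TE scale" using \<psi>d zero_dual' by (auto simp: TE_iff')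
        then have "tform x (tmult (0, \<psi>) (d, 0) - tmult (d, 0) (0, \<psi>)) = 0" using orth comT by blast
        then show ?thesis using xx dual_zero'[OF \<chi>d] dual_diff'[OF \<psi>d] by (simp add: tform_def tmult_def)
      qed
      then have "d * c - c * d = 0" by (rule sep0')
      then show ?thesis by simp
    qed
    have ann: "\<chi> y = 0" if "y \<in> Kc scale (*) UNIV" for y
    proof -
      have "\<chi> (b * d - d * b) = 0" for b d
      proof -
        have "(b, 0) \<in> TE scale" "(d, 0) \<in> TE scale" using zero_dual' by (auto simp: TE_iff')
        then have "tform x (tmult (b, 0) (d, 0) - tmult (d, 0) (b, 0)) = 0" using orth comT by blast
        then show ?thesis using xx by (simp add: tform_def tmult_def)
      qed
      then show ?thesis using span_dual_zero'[OF \<chi>d _ that[unfolded Kc_def]] by blast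
    qed
    show "x \<in> Z" using Zeq xx cen ann \<chi>d by (auto simp: Zc_def Ann_def)
  next
    fix x assume x: "x \<in> Z"
    obtain c \<chi> where xx: "x = (c, \<chi>)" by (cases x)
    have cen: "c * d = d * c" for d using x xx Zeq by (auto simp: Zc_def)
    have \<chi>d: "\<chi> \<in> dual scale" and ann: "\<And>y. y \<in> Kc scale (*) UNIV \<Longrightarrow> \<chi> y = 0"
      using x xx Zeq by (auto simp: Ann_def)
    have xTE: "x \<in> TE scale" using xx \<chi>d TE_iff' by simp
    have "tform x y = 0" if "y \<in> KT" for y
    proof (rule tform_span'[OF xTE _ that[unfolded KT_def Kc_def]])
      fix g assume "g \<in> {tmult u v - tmult v u |u v. u \<in> TE scale \<and> v \<in> TE scale}"
      then obtain u v where g: "g = tmult u v - tmult v u" by blast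
      obtain b \<psi> where u: "u = (b, \<psi>)" by (cases u)
      obtain d \<theta> where v: "v = (d, \<theta>)" by (cases v)
      have "b * d - d * b \<in> Kc scale (*) UNIV" unfolding Kc_def by (rule V.span_base) blast
      then show "tform x g = 0" using xx g u v cen[of b] cen[of d] ann by (simp add: tform_def tmult_def)
    qed
    then show "x \<in> perp scale (Tc (tscale scale) tmult tone p 0 (TE scale))"
      using xTE T0 by (auto simp: perp_def)
  qed
  have P2: "perp scale (Tc (tscale scale) tmult tone p n (TE scale))
            = {0} \<times> Ann scale (Tc scale (*) 1 p n UNIV)" if n: "n \<ge> 1" for n
  proof -
    obtain k where mk: "p ^ n = Suc (Suc k)" using mf[OF n] by blast
    have Tn: "Tc (tscale scale) tmult tone p n (TE scale) = {x \<in> TE scale. apow tmult tone x (p ^ n) \<in> KT}"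
      by (simp add: Tc_def KT_def)
    show ?thesis
    proof (intro set_eqI iffI)
      fix x assume x: "x \<in> perp scale (Tc (tscale scale) tmult tone p n (TE scale))"
      obtain c \<chi> where xx: "x = (c, \<chi>)" by (cases x)
      have xTE: "x \<in> TE scale" and orth: "\<And>y. y \<in> TE scale \<Longrightarrow> apow tmult tone y (p ^ n) \<in> KT \<Longrightarrow> tform x y = 0"
        using x Tn by (auto simp: perp_def)
      have \<chi>d: "\<chi> \<in> dual scale" using xTE xx TE_iff' by simp
      have c0: "c = 0"
      proof (rule sep0')
        fix \<psi> assume \<psi>d: "\<psi> \<in> dual scale"
        have "(0, \<psi>) \<in> TE scale" using \<psi>d by (auto simp: TE_iff')
        moreover have "apow tmult tone (0, \<psi>) (p ^ n) \<in> KT"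
          unfolding mk apow_nil'[OF \<psi>d] KT_def Kc_def by (rule T.span_zero)
        ultimately have "tform x (0, \<psi>) = 0" by (rule orth)
        then show "\<psi> c = 0" using xx dual_zero'[OF \<chi>d] by (simp add: tform_def)
      qed
      have "\<chi> b = 0" if b: "b \<in> Tc scale (*) 1 p n UNIV" for b
      proof -
        have "b ^ (p ^ n) \<in> Kc scale (*) UNIV" using b by (simp add: Tc_def apow_ring')
        then have "apow tmult tone (b, 0) (p ^ n) \<in> KT" unfolding apow_a0' KT_def by (rule K_emb')
        moreover have "(b, 0) \<in> TE scale" using zero_dual' by (simp add: TE_iff')
        ultimately have "tform x (b, 0) = 0" using orth by blast
        then show ?thesis using xx by (simp add: tform_def)
      qed
      then show "x \<in> {0} \<times> Ann scale (Tc scale (*) 1 p n UNIV)" using xx c0 \<chi>d by (auto simp: Ann_def)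
    next
      fix x :: "'a \<times> ('a \<Rightarrow> 'k)" assume x: "x \<in> {0} \<times> Ann scale (Tc scale (*) 1 p n UNIV)"
      then obtain \<chi> where xx: "x = (0, \<chi>)" and \<chi>d: "\<chi> \<in> dual scale"
        and ann: "\<And>b. b \<in> Tc scale (*) 1 p n UNIV \<Longrightarrow> \<chi> b = 0" by (auto simp: Ann_def)
      have xTE: "x \<in> TE scale" using xx \<chi>d TE_iff' by simp
      have "tform x y = 0" if y: "y \<in> TE scale" "apow tmult tone y (p ^ n) \<in> KT" for y
      proof -
        obtain b \<psi> where yy: "y = (b, \<psi>)" by (cases y)
        have \<psi>d: "\<psi> \<in> dual scale" using y yy TE_iff' by simp
        have "fst (apow tmult tone y (p ^ n)) \<in> Kc scale (*) UNIV" using y(2) unfolding KT_def by (rule fst_K')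
        then have "b \<in> Tc scale (*) 1 p n UNIV" using yy by (simp add: apow_fst' Tc_def apow_ring')
        then show ?thesis using xx yy ann dual_zero'[OF \<psi>d] by (simp add: tform_def)
      qed
      then show "x \<in> perp scale (Tc (tscale scale) tmult tone p n (TE scale))"
        using xTE Tn by (auto simp: perp_def)
    qed
  qed
  have P3: "perp scale (TZc tmult tone p n Z)
            = Kc scale (*) UNIV \<times> Ann scale (TZc (*) 1 p n (Zc (*) UNIV))" if n: "n \<ge> 1" for n
  proof -
    obtain k where mk: "p ^ n = Suc (Suc k)" using mf[OF n] by blast
    show ?thesis
    proof (intro set_eqI iffI)
      fix x assume x: "x \<in> perp scale (TZc tmult tone p n Z)"
      obtain c \<chi> where xx: "x = (c, \<chi>)" by (cases x)
      have xTE: "x \<in> TE scale" and orth: "\<And>y. y \<in> Z \<Longrightarrow> apow tmult tone y (p ^ n) = 0 \<Longrightarrow> tform x y = 0"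
        using x by (auto simp: perp_def TZc_def)
      have \<chi>d: "\<chi> \<in> dual scale" using xTE xx TE_iff' by simp
      have cK: "c \<in> Kc scale (*) UNIV"
      proof (rule ccontr)
        assume "c \<notin> Kc scale (*) UNIV"
        then obtain \<phi> where \<phi>d: "\<phi> \<in> dual scale"
          and \<phi>0: "\<forall>s\<in>{a * b - b * a |a b. a \<in> UNIV \<and> b \<in> UNIV}. \<phi> s = 0" and \<phi>c: "\<phi> c \<noteq> 0"
          unfolding Kc_def using sep' by blast
        have "\<phi> \<in> Ann scale (Kc scale (*) UNIV)"
          using span_dual_zero'[OF \<phi>d] \<phi>0 \<phi>d unfolding Ann_def Kc_def by blast
        then have "(0, \<phi>) \<in> Z" using Zeq by (simp add: Zc_def)
        moreover have "apow tmult tone (0, \<phi>) (p ^ n) = 0" unfolding mk by (rule apow_nil'[OF \<phi>d])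
        ultimately have "tform x (0, \<phi>) = 0" by (rule orth)
        then show False using xx dual_zero'[OF \<chi>d] \<phi>c by (simp add: tform_def)
      qed
      have "\<chi> a = 0" if a: "a \<in> TZc (*) 1 p n (Zc (*) UNIV)" for a
      proof -
        have "(a, 0) \<in> Z" using a Zeq zero_dual' by (simp add: TZc_def Ann_def)
        moreover have "apow tmult tone (a, 0 :: 'a \<Rightarrow> 'k) (p ^ n) = 0"
        proof -
          have "a ^ (p ^ n) = 0" using a by (simp add: TZc_def apow_ring')
          then show ?thesis unfolding apow_a0' by (simp add: zero_prod_def)
        qed
        ultimately have "tform x (a, 0) = 0" by (rule orth)
        then show ?thesis using xx by (simp add: tform_def)
      qed
      then show "x \<in> Kc scale (*) UNIV \<times> Ann scale (TZc (*) 1 p n (Zc (*) UNIV))"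
        using xx cK \<chi>d by (auto simp: Ann_def)
    next
      fix x assume x: "x \<in> Kc scale (*) UNIV \<times> Ann scale (TZc (*) 1 p n (Zc (*) UNIV))"
      then obtain c \<chi> where xx: "x = (c, \<chi>)" and cK: "c \<in> Kc scale (*) UNIV" and \<chi>d: "\<chi> \<in> dual scale"
        and ann: "\<And>b. b \<in> TZc (*) 1 p n (Zc (*) UNIV) \<Longrightarrow> \<chi> b = 0" by (auto simp: Ann_def)
      have xTE: "x \<in> TE scale" using xx \<chi>d TE_iff' by simp
      have "tform x y = 0" if y: "y \<in> Z" "apow tmult tone y (p ^ n) = 0" for y
      proof -
        obtain a \<phi> where yy: "y = (a, \<phi>)" by (cases y)
        have aZ: "a \<in> Zc (*) UNIV" and \<phi>c: "\<phi> c = 0" using y(1) yy Zeq cK by (auto simp: Ann_def)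
        have "fst (apow tmult tone y (p ^ n)) = 0" using y(2) by simp
        then have "a \<in> TZc (*) 1 p n (Zc (*) UNIV)" using yy aZ by (simp add: apow_fst' TZc_def apow_ring')
        then show ?thesis using xx yy ann \<phi>c by (simp add: tform_def)
      qed
      then show "x \<in> perp scale (TZc tmult tone p n Z)"
        using xTE by (auto simp: perp_def TZc_def)
    qed
  qed
  have P4: "perp scale (PZc (tscale scale) tmult tone p n Z)
            = UNIV \<times> Ann scale (PZc scale (*) 1 p n (Zc (*) UNIV))" if n: "n \<ge> 1" for n
  proof -
    obtain k where mk: "p ^ n = Suc (Suc k)" using mf[OF n] by blast
    have m0: "of_nat (Suc (Suc k)) = (0::'k)" using mf[OF n] mk by simp
    show ?thesis
    proof (intro set_eqI iffI)
      fix x assume x: "x \<in> perp scale (PZc (tscale scale) tmult tone p n Z)"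
      obtain c \<chi> where xx: "x = (c, \<chi>)" by (cases x)
      have xTE: "x \<in> TE scale" and orth: "\<And>y. y \<in> PZc (tscale scale) tmult tone p n Z \<Longrightarrow> tform x y = 0"
        using x by (auto simp: perp_def)
      have \<chi>d: "\<chi> \<in> dual scale" using xTE xx TE_iff' by simp
      have gen: "\<chi> s = 0" if sS: "s \<in> {apow (*) 1 z (p ^ n) |z. z \<in> Zc (*) UNIV}" for s :: 'a
      proof -
        obtain a where s0: "s = apow (*) 1 a (p ^ n)" and a: "a \<in> Zc (*) UNIV" using sS by blast
        have s: "s = a ^ (p ^ n)" using s0 apow_ring'[of a "p ^ n"] by simp
        have "(a, 0) \<in> Z" using a Zeq zero_dual' by (simp add: Ann_def)
        then have "apow tmult tone (a, 0) (p ^ n) \<in> PZc (tscale scale) tmult tone p n Z"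
          unfolding PZc_def by (intro T.span_base) blast
        then have "tform x (a ^ (p ^ n), 0) = 0" using orth by (simp add: apow_a0')
        then show ?thesis using xx s by (simp add: tform_def)
      qed
      have "\<chi> y = 0" if "y \<in> PZc scale (*) 1 p n (Zc (*) UNIV)" for y
        using span_dual_zero'[OF \<chi>d gen that[unfolded PZc_def]] by blast
      then show "x \<in> UNIV \<times> Ann scale (PZc scale (*) 1 p n (Zc (*) UNIV))"
        using xx \<chi>d by (auto simp: Ann_def)
    next
      fix x :: "'a \<times> ('a \<Rightarrow> 'k)" assume x: "x \<in> UNIV \<times> Ann scale (PZc scale (*) 1 p n (Zc (*) UNIV))"
      then obtain c \<chi> where xx: "x = (c, \<chi>)" and \<chi>d: "\<chi> \<in> dual scale"
        and ann: "\<And>b. b \<in> PZc scale (*) 1 p n (Zc (*) UNIV) \<Longrightarrow> \<chi> b = 0" by (auto simp: Ann_def)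
      have xTE: "x \<in> TE scale" using xx \<chi>d TE_iff' by simp
      have "tform x y = 0" if y: "y \<in> PZc (tscale scale) tmult tone p n Z" for y
      proof (rule tform_span'[OF xTE _ y[unfolded PZc_def]])
        fix g assume "g \<in> {apow tmult tone z (p ^ n) |z. z \<in> Z}"
        then obtain z where g: "g = apow tmult tone z (p ^ n)" and z: "z \<in> Z" by blast
        obtain a \<phi> where zz: "z = (a, \<phi>)" by (cases z)
        have aZ: "a \<in> Zc (*) UNIV" using z zz Zeq by auto
        have g2: "g = (a ^ (p ^ n), 0)" unfolding g zz mk apow_central'[OF aZ] m0 by (simp add: fun_eq_iff)
        have "apow (*) 1 a (p ^ n) \<in> PZc scale (*) 1 p n (Zc (*) UNIV)"
          unfolding PZc_def by (intro V.span_base) (use aZ in blast)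
        then have "\<chi> (a ^ (p ^ n)) = 0" using ann by (simp add: apow_ring')
        then show "tform x g = 0" using xx g2 by (simp add: tform_def)
      qed
      then show "x \<in> perp scale (PZc (tscale scale) tmult tone p n Z)"
        using xTE by (auto simp: perp_def)
    qed
  qed
  show ?thesis using P1 P2 P3 P4 Zeq unfolding Z_def by blast
qed

end
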